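(* The zero-error capacity of the $(w,d)$ sliding-window erasure channel with input alphabet of size $q$ satisfies $C_0\ge 1-\frac{1}{w}\log_q V^w_d(q)$.
   Context: $V^n_r(q)=\sum_{i=0}^{r}\binom{n}{i}(q-1)^i$. Integers $w\ge1$, $0\le d\le w$, $q\ge2$, $|\mathcal{X}|=q$. The $(w,d)$ sliding-window erasure channel: a noise word $v(0:n-1)\in\{0,1\}^n$ is admissible if for some initial pattern $v(-w:-1)\in\{0,1\}^w$ every $w$ consecutive entries of $(v(-w),\dots,v(n-1))$ contain at most $d$ ones; output $y(t)=x(t)$ if $v(t)=0$ and $y(t)=*$ (a symbol not in $\mathcal{X}$) if $v(t)=1$. A zero-error code of length $n$ is a set $\mathcal{F}\subseteq\mathcal{X}^n$ such that no output word can be produced by two distinct codewords under admissible noise; $C_0=\sup_n\sup_{\mathcal{F}}\log_q|\mathcal{F}|/n$. *)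

theory Defs
  imports Complex_Main
begin

definition hamming_vol :: "nat \<Rightarrow> nat \<Rightarrow> nat \<Rightarrow> nat" where
  "hamming_vol n r q = (\<Sum>i=0..r. (n choose i) * (q - 1) ^ i)"

text \<open>Noise word v (as a bool list of length n; True = erasure) is admissible for the
  (w,d) sliding-window erasure channel: there is an initial pattern u of length w such
  that every w consecutive entries of u @ v contain at most d ones.\<close>
definition sw_admissible :: "nat \<Rightarrow> nat \<Rightarrow> bool list \<Rightarrow> bool" where
  "sw_admissible w d v \<longleftrightarrow>
     (\<exists>u. length u = w \<and>
        (\<forall>j. j + w \<le> length (u @ v) \<longrightarrow>
             card {t. j \<le> t \<and> t < j + w \<and> (u @ v) ! t} \<le> d))"

text \<open>Channel output: None plays the role of the erasure symbol *.\<close>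
definition sw_output :: "'a list \<Rightarrow> bool list \<Rightarrow> 'a option list" where
  "sw_output x v = map (\<lambda>(a, e). if e then None else Some a) (zip x v)"

definition sw_zero_error_code :: "nat \<Rightarrow> nat \<Rightarrow> nat \<Rightarrow> 'a list set \<Rightarrow> bool" where
  "sw_zero_error_code w d n F \<longleftrightarrow>
     (\<forall>x\<in>F. length x = n) \<and>
     (\<forall>x1\<in>F. \<forall>x2\<in>F. x1 \<noteq> x2 \<longrightarrow>
        \<not> (\<exists>v1 v2. length v1 = n \<and> length v2 = n \<and> sw_admissible w d v1 \<and> sw_admissible w d v2
              \<and> sw_output x1 v1 = sw_output x2 v2))"

definition sw_C0 :: "nat \<Rightarrow> nat \<Rightarrow> 'a::finite itself \<Rightarrow> real" where
  "sw_C0 w d _ = Sup {log (real (card (UNIV :: 'a set))) (real (card F)) / real n | n F.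
       n \<ge> 1 \<and> F \<noteq> {} \<and> sw_zero_error_code w d n (F :: 'a list set)}"

end

theory Submission
  imports Defs
begin

fun hdist :: "'a list \<Rightarrow> 'a list \<Rightarrow> nat" where
  "hdist (a#xs) (b#ys) = (if a = b then 0 else 1) + hdist xs ys"
| "hdist _ _ = 0"

lemma hdist_sym: "hdist x y = hdist y x"
  by (induction x y rule: hdist.induct) auto

lemma hdist_self: "hdist x x = 0"
  by (induction x) auto

definition hball :: "'a list \<Rightarrow> nat \<Rightarrow> 'a list set" where
  "hball x r = {y. length y = length x \<and> hdist x y \<le> r}"

lemma hvol_pos: "hamming_vol n r q \<ge> 1"
proof -
  have "(n choose 0) * (q - 1) ^ 0 \<le> (\<Sum>i=0..r. (n choose i) * (q - 1) ^ i)"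
    by (rule member_le_sum) auto
  then show ?thesis by (simp add: hamming_vol_def)
qed

lemma hvol_0: "hamming_vol n 0 q = 1"
  by (simp add: hamming_vol_def)

lemma hvol_Suc: "hamming_vol (Suc n) (Suc r) q = hamming_vol n (Suc r) q + (q - 1) * hamming_vol n r q"
proof -
  define c where "c = q - 1"
  have "hamming_vol (Suc n) (Suc r) q = (\<Sum>i\<le>Suc r. (Suc n choose i) * c ^ i)"
    by (simp add: hamming_vol_def c_def atLeast0AtMost)
  also have "\<dots> = 1 + (\<Sum>i\<le>r. (Suc n choose Suc i) * c ^ Suc i)"
    by (subst sum.atMost_Suc_shift) simp
  also have "\<dots> = 1 + (\<Sum>i\<le>r. (n choose Suc i) * c ^ Suc i) + (\<Sum>i\<le>r. (n choose i) * c ^ Suc i)"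
    by (simp add: sum.distrib algebra_simps)
  also have "1 + (\<Sum>i\<le>r. (n choose Suc i) * c ^ Suc i) = (\<Sum>i\<le>Suc r. (n choose i) * c ^ i)"
    by (subst sum.atMost_Suc_shift) simp
  also have "(\<Sum>i\<le>r. (n choose i) * c ^ Suc i) = c * (\<Sum>i\<le>r. (n choose i) * c ^ i)"
    by (simp add: sum_distrib_left algebra_simps)
  finally show ?thesis
    by (simp add: hamming_vol_def c_def atLeast0AtMost)
qed

lemma hball_Cons_Suc:
  "hball (a#xs) (Suc r) \<subseteq> (\<lambda>ys. a#ys) ` hball xs (Suc r) \<union>
     (\<lambda>(b,ys). b#ys) ` ((UNIV - {a}) \<times> hball xs r)"
proof
  fix y assume "y \<in> hball (a#xs) (Suc r)"
  then obtain b ys where y: "y = b#ys" and l: "length ys = length xs"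
    and h: "(if a = b then 0 else 1) + hdist xs ys \<le> Suc r"
    unfolding hball_def by (cases y) auto
  show "y \<in> (\<lambda>ys. a#ys) ` hball xs (Suc r) \<union> (\<lambda>(b,ys). b#ys) ` ((UNIV - {a}) \<times> hball xs r)"
  proof (cases "a = b")
    case True
    then show ?thesis using y l h by (auto simp: hball_def)
  next
    case False
    then have "(b, ys) \<in> (UNIV - {a}) \<times> hball xs r" using l h by (auto simp: hball_def)
    then show ?thesis using y by force
  qed
qed

lemma finite_hball: "finite (hball (x::'a::finite list) r)"
proof -
  have "hball x r \<subseteq> {xs. set xs \<subseteq> UNIV \<and> length xs = length x}" by (auto simp: hball_def)
  then show ?thesis using finite_lists_length_eq[of "UNIV::'a set"] finite_subset by auto
qed

lemma card_hball: "card (hball (x::'a::finite list) r) \<le> hamming_vol (length x) r (card (UNIV::'a set))"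
proof (induction x arbitrary: r)
  case Nil
  have "hball ([]::'a list) r = {[]}" by (auto simp: hball_def)
  then show ?case using hvol_pos[of 0 r] by simp
next
  case (Cons a xs)
  show ?case
  proof (cases r)
    case 0
    have "hball (a#xs) 0 \<subseteq> {a#xs}"
    proof
      fix y assume "y \<in> hball (a#xs) 0"
      then show "y \<in> {a#xs}"
      proof (induction y)
        case Nil then show ?case by (simp add: hball_def)
      next
        case (Cons b ys)
        then have "a = b" "hdist xs ys = 0" "length ys = length xs"
          by (auto simp: hball_def split: if_splits)
        moreover have "hdist xs ys = 0 \<Longrightarrow> length ys = length xs \<Longrightarrow> ys = xs"
        proof (induction xs ys rule: hdist.induct)
          case (1 a xs b ys) then show ?case by (auto split: if_splits)
        qed auto
        ultimately show ?case by simp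
      qed
    qed
    then have "card (hball (a#xs) 0) \<le> card {a#xs}" by (rule card_mono[rotated]) simp
    then have "card (hball (a#xs) 0) \<le> 1" by simp
    then show ?thesis using 0 hvol_0 by simp
  next
    case (Suc r')
    let ?A = "(\<lambda>ys. a#ys) ` hball xs (Suc r')"
    let ?B = "(\<lambda>(b,ys). b#ys) ` ((UNIV - {a}) \<times> hball xs r')"
    have fA: "finite ?A" using finite_hball by auto
    have fB: "finite ?B" by (intro finite_imageI finite_cartesian_product) (auto simp: finite_hball)
    have "card (hball (a#xs) r) \<le> card (?A \<union> ?B)"
      using hball_Cons_Suc[of a xs r'] Suc fA fB by (simp add: card_mono)
    also have "\<dots> \<le> card ?A + card ?B" by (rule card_Un_le)
    also have "card ?A \<le> card (hball xs (Suc r'))" by (rule card_image_le) (rule finite_hball)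
    also have "card ?B \<le> card ((UNIV - {a}) \<times> hball xs r')"
      by (rule card_image_le) (simp add: finite_hball)
    also have "\<dots> = (card (UNIV::'a set) - 1) * card (hball xs r')"
      by (simp add: card_cartesian_product)
    finally have "card (hball (a#xs) r) \<le> card (hball xs (Suc r')) + (card (UNIV::'a set) - 1) * card (hball xs r')"
      by simp
    also have "\<dots> \<le> hamming_vol (length xs) (Suc r') (card (UNIV::'a set)) + (card (UNIV::'a set) - 1) * hamming_vol (length xs) r' (card (UNIV::'a set))"
      using Cons.IH[of "Suc r'"] Cons.IH[of r'] by (simp add: add_mono)
    also have "\<dots> = hamming_vol (length (a#xs)) r (card (UNIV::'a set))"
      using Suc hvol_Suc by simp
    finally show ?thesis .
  qed
qed

lemma greedy:
  fixes U :: "'a list set"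
  assumes "finite U" "\<forall>x\<in>U. length x = n"
  shows "\<exists>F \<subseteq> U. (\<forall>x\<in>F. \<forall>y\<in>F. x \<noteq> y \<longrightarrow> hdist x y > d) \<and> U \<subseteq> (\<Union>x\<in>F. hball x d)"
  using assms
proof (induction "card U" arbitrary: U rule: less_induct)
  case less
  show ?case
  proof (cases "U = {}")
    case True then show ?thesis by auto
  next
    case False
    then obtain x where x: "x \<in> U" by auto
    let ?U' = "U - hball x d"
    have xb: "x \<in> hball x d" by (simp add: hball_def hdist_self)
    have "?U' \<subseteq> U - {x}" using xb by auto
    then have "card ?U' \<le> card (U - {x})" using less.prems by (simp add: card_mono)
    also have "\<dots> < card U" using card_Diff1_less[OF less.prems(1) x] .
    finally have lt: "card ?U' < card U" .
    obtain F' where F': "F' \<subseteq> ?U'" "\<forall>x\<in>F'. \<forall>y\<in>F'. x \<noteq> y \<longrightarrow> hdist x y > d"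
      "?U' \<subseteq> (\<Union>x\<in>F'. hball x d)"
      using less.hyps[OF lt] less.prems by auto
    have far: "\<And>y. y \<in> F' \<Longrightarrow> hdist x y > d \<and> hdist y x > d"
    proof -
      fix y assume "y \<in> F'"
      then have "y \<notin> hball x d" "y \<in> U" using F'(1) by auto
      moreover have "length y = length x" using x \<open>y \<in> U\<close> less.prems by auto
      ultimately show "hdist x y > d \<and> hdist y x > d" using hdist_sym[of x y]
        by (auto simp: hball_def)
    qed
    show ?thesis
    proof (intro exI[of _ "insert x F'"] conjI)
      show "insert x F' \<subseteq> U" using x F'(1) by auto
      show "\<forall>xa\<in>insert x F'. \<forall>y\<in>insert x F'. xa \<noteq> y \<longrightarrow> d < hdist xa y"
        using F'(2) far by auto
      show "U \<subseteq> (\<Union>x\<in>insert x F'. hball x d)" using F'(3) by auto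
    qed
  qed
qed

lemma output_hdist:
  "length x1 = length v1 \<Longrightarrow> length x2 = length v2 \<Longrightarrow> length x1 = length x2 \<Longrightarrow>
   sw_output x1 v1 = sw_output x2 v2 \<Longrightarrow> hdist x1 x2 \<le> length (filter id v1)"
proof (induction x1 arbitrary: x2 v1 v2)
  case Nil then show ?case by simp
next
  case (Cons a x1)
  then obtain b x2' e1 v1' e2 v2' where
    "x2 = b#x2'" "v1 = e1#v1'" "v2 = e2#v2'"
    by (metis length_Suc_conv)
  note eqs = this
  have o: "sw_output (a#x1) (e1#v1') = sw_output (b#x2') (e2#v2')" using Cons.prems eqs by simp
  then have oo: "sw_output x1 v1' = sw_output x2' v2'" and e: "e1 = e2" "\<not> e1 \<Longrightarrow> a = b"
    by (auto simp: sw_output_def split: if_splits)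
  have IH: "hdist x1 x2' \<le> length (filter id v1')"
    using Cons.IH[of v1' x2' v2'] Cons.prems eqs oo by (simp add: id_def)
  show ?case using IH e eqs by (auto simp: id_def)
qed

lemma adm_count:
  assumes "sw_admissible w d v" "length v = w"
  shows "length (filter id v) \<le> d"
proof -
  obtain u where u: "length u = w"
    "\<forall>j. j + w \<le> length (u @ v) \<longrightarrow> card {t. j \<le> t \<and> t < j + w \<and> (u @ v) ! t} \<le> d"
    using assms(1) unfolding sw_admissible_def by blast
  have c: "card {t. w \<le> t \<and> t < w + w \<and> (u @ v) ! t} \<le> d" using u assms(2) by auto
  have "{t. w \<le> t \<and> t < w + w \<and> (u @ v) ! t} = (\<lambda>i. i + w) ` {i. i < length v \<and> v ! i}"
  proof (rule set_eqI, rule iffI)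
    fix t assume "t \<in> {t. w \<le> t \<and> t < w + w \<and> (u @ v) ! t}"
    then show "t \<in> (\<lambda>i. i + w) ` {i. i < length v \<and> v ! i}"
      using u(1) assms(2) by (auto simp: nth_append intro!: image_eqI[of _ _ "t - w"])
  next
    fix t assume "t \<in> (\<lambda>i. i + w) ` {i. i < length v \<and> v ! i}"
    then show "t \<in> {t. w \<le> t \<and> t < w + w \<and> (u @ v) ! t}"
      using u(1) assms(2) by (auto simp: nth_append)
  qed
  moreover have "card ((\<lambda>i. i + w) ` {i. i < length v \<and> v ! i}) = card {i. i < length v \<and> v ! i}"
    by (rule card_image) (simp add: inj_on_def)
  ultimately show ?thesis using c by (simp add: length_filter_conv_card)
qed

theorem theorem5:
  fixes w d :: nat
  assumes "w \<ge> 1" and "d \<le> w" and "card (UNIV :: 'a::finite set) \<ge> 2"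
  shows "1 - (1 / real w) * log (real (card (UNIV :: 'a set))) (real (hamming_vol w d (card (UNIV :: 'a set))))
           \<le> sw_C0 w d TYPE('a)"
proof -
  define q where "q = (card (UNIV::'a set))"
  define V where "V = hamming_vol w d q"
  define U where "U = {xs::'a list. set xs \<subseteq> UNIV \<and> length xs = w}"
  have fU: "finite U" unfolding U_def using finite_lists_length_eq[of "UNIV::'a set"] by simp
  have cU: "card U = q ^ w" unfolding U_def q_def by (rule card_lists_length_eq) simp
  obtain F where F: "F \<subseteq> U" "\<forall>x\<in>F. \<forall>y\<in>F. x \<noteq> y \<longrightarrow> hdist x y > d"
    "U \<subseteq> (\<Union>x\<in>F. hball x d)"
    using greedy[OF fU, of w d] unfolding U_def by auto
  have fF: "finite F" using F(1) fU finite_subset by auto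
  have "q ^ w \<le> card (\<Union>x\<in>F. hball x d)"
    using cU F(3) fF by (metis card_mono finite_UN_I finite_hball)
  also have "\<dots> \<le> (\<Sum>x\<in>F. card (hball x d))" by (rule card_UN_le[OF fF])
  also have "\<dots> \<le> (\<Sum>x\<in>F. V)"
  proof (rule sum_mono)
    fix x assume "x \<in> F"
    then have "length x = w" using F(1) U_def by auto
    then show "card (hball x d) \<le> V" using card_hball[of x d] V_def q_def by simp
  qed
  finally have key: "q ^ w \<le> card F * V" by simp
  have q2: "q \<ge> 2" using assms(3) q_def by simp
  have V1: "V \<ge> 1" using hvol_pos V_def by simp
  have Fne: "F \<noteq> {}"
  proof
    assume "F = {}"
    then have "q ^ w \<le> 0" using key by simp
    with q2 show False by simp
  qed
  have cF: "card F \<ge> 1" using Fne fF by (simp add: Suc_leI card_gt_0_iff)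
  have code: "sw_zero_error_code w d w F"
    unfolding sw_zero_error_code_def
  proof (intro conjI ballI impI notI)
    fix x assume "x \<in> F" then show "length x = w" using F(1) U_def by auto
  next
    fix x1 x2 assume x: "x1 \<in> F" "x2 \<in> F" "x1 \<noteq> x2"
      and "\<exists>v1 v2. length v1 = w \<and> length v2 = w \<and> sw_admissible w d v1 \<and> sw_admissible w d v2
              \<and> sw_output x1 v1 = sw_output x2 v2"
    then obtain v1 v2 where v: "length v1 = w" "length v2 = w" "sw_admissible w d v1"
      "sw_output x1 v1 = sw_output x2 v2" by blast
    have l: "length x1 = w" "length x2 = w" using x F(1) U_def by auto
    have "hdist x1 x2 \<le> length (filter id v1)" using output_hdist[of x1 v1 x2 v2] v l by simp
    also have "\<dots> \<le> d" using adm_count v by simp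
    finally show False using F(2) x by force
  qed
  define S where "S = {log (real (card (UNIV :: 'a set))) (real (card F)) / real n | n F.
       n \<ge> 1 \<and> F \<noteq> {} \<and> sw_zero_error_code w d n (F :: 'a list set)}"
  have mem: "log q (card F) / w \<in> S" unfolding S_def q_def
    using code Fne assms(1) by (intro CollectI exI[of _ w] exI[of _ F]) simp
  have bdd: "bdd_above S"
  proof (rule bdd_aboveI[of _ 1])
    fix s assume "s \<in> S"
    then obtain n G where s: "s = log q (card G) / n" "n \<ge> 1" "G \<noteq> {}"
      "sw_zero_error_code w d n (G :: 'a list set)" unfolding S_def q_def by blast
    have "G \<subseteq> {xs::'a list. set xs \<subseteq> UNIV \<and> length xs = n}"
      using s(4) unfolding sw_zero_error_code_def by auto
    moreover have "finite {xs::'a list. set xs \<subseteq> UNIV \<and> length xs = n}"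
      by (rule finite_lists_length_eq) simp
    ultimately have "card G \<le> card {xs::'a list. set xs \<subseteq> UNIV \<and> length xs = n}" and fG: "finite G"
      by (auto intro: card_mono finite_subset)
    then have cG: "card G \<le> q ^ n" unfolding q_def using card_lists_length_eq[of "UNIV::'a set" n] by simp
    have "card G \<ge> 1" using s(3) fG by (simp add: Suc_leI card_gt_0_iff)
    moreover have "real (card G) \<le> real q ^ n" using cG
      by (metis of_nat_le_iff of_nat_power)
    ultimately have "card G \<ge> 1" "real (card G) \<le> real q ^ n" by auto
    then have "log q (card G) \<le> log q (real q ^ n)" using q2 by (subst log_le_cancel_iff) auto
    also have "\<dots> = n" using q2 by (simp add: log_nat_power)
    finally show "s \<le> 1" using s(1,2) by (simp add: divide_le_eq_1)
  qed
  have "real q ^ w \<le> real (card F) * real V" using key by (metis of_nat_le_iff of_nat_mult of_nat_power)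
  then have "log q (real q ^ w) \<le> log q (real (card F) * real V)"
    using q2 cF V1 by (subst log_le_cancel_iff) auto
  then have "real w \<le> log q (card F) + log q V"
    using q2 cF V1 by (simp add: log_nat_power log_mult)
  then have le: "real w - log q V \<le> log q (card F)" by simp
  have wp: "real w > 0" using assms(1) by simp
  have "1 - (1 / real w) * log q V = (real w - log q V) / real w"
    using wp by (simp add: field_simps)
  also have "\<dots> \<le> log q (card F) / w"
    using le wp by (simp add: divide_right_mono)
  finally have "1 - (1 / real w) * log q V \<le> log q (card F) / w" .
  also have "\<dots> \<le> Sup S" by (rule cSup_upper[OF mem bdd])
  finally show ?thesis unfolding S_def sw_C0_def q_def V_def .
qed

end
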